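(* Let $H_A$ and $H_B$ be finite-dimensional Hilbert spaces with $n=\dim H_A$, and let $|\phi\rangle,|\psi\rangle\in H_A\otimes H_B$ be unit vectors such that $\langle\phi|\psi\rangle$ is a real positive number. Let $s,t>0$ with $s+t=1$, $s\le t$ and $\sqrt{s/t}\ge\langle\phi|\psi\rangle$. Then there exist an orthonormal basis $\{|i\rangle\}_{i=1}^n$ of $H_A$, nonnegative reals $s_i,t_i$ and unit vectors $|\eta_i\rangle,|\gamma_i\rangle\in H_B$ ($i=1,\dots,n$) such that $$|\phi\rangle=\sum_{i=1}^n\sqrt{s_i}\,|i\rangle|\eta_i\rangle,\qquad |\psi\rangle=\sum_{i=1}^n\sqrt{t_i}\,|i\rangle|\gamma_i\rangle,$$ and for every $i=1,\dots,n$: $\langle\eta_i|\gamma_i\rangle$ is real, $s\,s_i\le t\,t_i$, and $\sqrt{s\,s_i}\ge\sqrt{t\,t_i}\,\langle\eta_i|\gamma_i\rangle$ (i.e. $\sqrt{s s_i/(t t_i)}\ge\langle\eta_i|\gamma_i\rangle$ whenever $t_i>0$).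
   Context: Here $s$ and $t$ are the prior probabilities with which the states $|\phi\rangle$ and $|\psi\rangle$ are prepared. The paper adopts, throughout, the normalization (obtained by multiplying $|\psi\rangle$ by a global phase) that $\langle\phi|\psi\rangle>0$, and the lemma is proved under the standing case assumption $\sqrt{s/t}\ge\langle\phi|\psi\rangle$. *)

theory Defs
  imports "HOL-Analysis.Analysis"
begin

text \<open>Finite-dimensional complex Hilbert spaces are modelled as complex^'n with 'n finite.
  The inner product is conjugate-linear in the first argument (Dirac convention).\<close>

definition cinner :: "complex ^ 'n \<Rightarrow> complex ^ 'n \<Rightarrow> complex" where
  "cinner x y = (\<Sum>j\<in>UNIV. cnj (x $ j) * y $ j)"

definition tensor :: "complex ^ 'a \<Rightarrow> complex ^ 'b \<Rightarrow> complex ^ ('a \<times> 'b)" where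
  "tensor x y = (\<chi> p. x $ fst p * y $ snd p)"

text \<open>An orthonormal family indexed by 'a in complex^'a (CARD('a) = dim vectors, hence a basis).\<close>
definition orthonormal_basis :: "('a \<Rightarrow> complex ^ 'a) \<Rightarrow> bool" where
  "orthonormal_basis e \<longleftrightarrow> (\<forall>i j. cinner (e i) (e j) = (if i = j then 1 else 0))"

end

theory Submission
  imports Defs
begin


lemma cinner_add_right: "cinner x (y + z) = cinner x y + cinner x z"
  by (simp add: cinner_def sum.distrib distrib_left)
lemma cinner_add_left: "cinner (x + y) z = cinner x z + cinner y z"
  by (simp add: cinner_def sum.distrib distrib_right)
lemma cinner_diff_right: "cinner x (y - z) = cinner x y - cinner x z"
  by (simp add: cinner_def sum_subtractf right_diff_distrib)
lemma cinner_diff_left: "cinner (x - y) z = cinner x z - cinner y z"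
  by (simp add: cinner_def sum_subtractf left_diff_distrib)
lemma cinner_scale_right: "cinner x (c *s y) = c * cinner x y"
  by (simp add: cinner_def sum_distrib_left mult_ac)
lemma cinner_scale_left: "cinner (c *s x) y = cnj c * cinner x y"
  by (simp add: cinner_def sum_distrib_left mult_ac)
lemma cinner_cnj: "cnj (cinner x y) = cinner y x"
  by (simp add: cinner_def mult_ac)
lemma cinner_zero_right[simp]: "cinner x 0 = 0" by (simp add: cinner_def)
lemma cinner_zero_left[simp]: "cinner 0 x = 0" by (simp add: cinner_def)
lemma cinner_sum_right: "finite I \<Longrightarrow> cinner x (\<Sum>i\<in>I. f i) = (\<Sum>i\<in>I. cinner x (f i))"
  by (induct I rule: finite_induct) (simp_all add: cinner_add_right)
lemma cinner_sum_left: "finite I \<Longrightarrow> cinner (\<Sum>i\<in>I. f i) y = (\<Sum>i\<in>I. cinner (f i) y)"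
  by (induct I rule: finite_induct) (simp_all add: cinner_add_left)
lemma cnj_mult_self: "cnj z * z = complex_of_real ((cmod z)^2)"
  using complex_norm_square[of z] by (simp add: mult.commute)
lemma cinner_self_real: "cinner x x = complex_of_real (\<Sum>j\<in>UNIV. (cmod (x $ j))^2)"
  unfolding cinner_def of_real_sum by (rule sum.cong[OF refl]) (rule cnj_mult_self)
lemma cinner_self_nonneg: "Re (cinner x x) \<ge> 0" "Im (cinner x x) = 0"
  by (simp_all add: cinner_self_real sum_nonneg)
lemma cinner_self_zero: "cinner x x = 0 \<longleftrightarrow> x = 0"
proof
  assume "cinner x x = 0"
  then have "(\<Sum>j\<in>UNIV. (cmod (x $ j))^2) = 0" unfolding cinner_self_real of_real_eq_0_iff .
  then have "\<forall>j\<in>UNIV. (cmod (x $ j))^2 = 0" by (subst (asm) sum_nonneg_eq_0_iff) auto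
  then show "x = 0" by (simp add: vec_eq_iff)
qed simp


lemma mv_add: "(T::complex^'n^'m) *v (x + y) = T *v x + T *v y"
  by (simp add: vec_eq_iff matrix_vector_mult_def sum.distrib distrib_left)
lemma mv_scale: "(T::complex^'n^'m) *v (c *s x) = c *s (T *v x)"
  by (simp add: vec_eq_iff matrix_vector_mult_def sum_distrib_left mult_ac)

lemma cinner_comb:
  "cinner (c *s x + d *s y) (c *s u + d *s v) =
     cnj c * c * cinner x u + cnj c * d * cinner x v + cnj d * c * cinner y u + cnj d * d * cinner y v"
  by (simp add: cinner_add_left cinner_add_right cinner_scale_left cinner_scale_right algebra_simps)

lemma unit_phase_exists:
  fixes K1 K2 :: real
  shows "\<exists>w::complex. cnj w * w = 1 \<and> Re w * K1 - Im w * K2 = 0"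
proof (cases "K1 = 0 \<and> K2 = 0")
  case True then show ?thesis by (intro exI[of _ 1]) simp
next
  case False
  define N where "N = sqrt (K1^2 + K2^2)"
  have Np: "N > 0" using False unfolding N_def
    by (metis add_nonneg_eq_0_iff power_zero_numeral real_sqrt_gt_0_iff sum_power2_gt_zero_iff zero_le_power2)
  have N2: "N^2 = K1^2 + K2^2" unfolding N_def by simp
  let ?w = "Complex (K2 / N) (K1 / N)"
  have c1: "cnj ?w * ?w = complex_of_real ((K2/N)^2 + (K1/N)^2)"
    by (simp add: complex_eq_iff power2_eq_square)
  have "(K2/N)^2 + (K1/N)^2 = (K2^2 + K1^2) / N^2" by (simp add: power_divide add_divide_distrib)
  also have "\<dots> = 1"
  proof -
    have "K2^2 + K1^2 = N^2" using N2 by simp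
    then show ?thesis using Np by simp
  qed
  finally have e: "(K2/N)^2 + (K1/N)^2 = 1" .
  have "cnj ?w * ?w = 1" using c1 e by simp
  moreover have "Re ?w * K1 - Im ?w * K2 = 0" by (simp add: field_simps)
  ultimately show ?thesis by blast
qed

lemma segment_lemma:
  fixes T :: "complex^'n^'n" and x y :: "complex^'n"
  assumes xx: "cinner x x = 1" and yy: "cinner y y = 1" and xy: "cinner x y = 0"
    and l0: "0 \<le> (lam::real)" and l1: "lam \<le> 1"
  shows "\<exists>c d. cinner (c *s x + d *s y) (c *s x + d *s y) = 1 \<and>
    cinner (c *s x + d *s y) (T *v (c *s x + d *s y)) =
      (1 - complex_of_real lam) * cinner x (T *v x) + complex_of_real lam * cinner y (T *v y)"
proof -
  have yx: "cinner y x = 0" using xy cinner_cnj[of x y] by simp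
  define p where "p = cinner x (T *v x)"
  define q where "q = cinner y (T *v y)"
  define B where "B = cinner x (T *v y)"
  define C where "C = cinner y (T *v x)"
  have val: "cinner (c *s x + d *s y) (T *v (c *s x + d *s y)) =
     cnj c * c * p + cnj c * d * B + cnj d * c * C + cnj d * d * q" for c d
    unfolding mv_add mv_scale cinner_comb p_def q_def B_def C_def by simp
  have nrm: "cinner (c *s x + d *s y) (c *s x + d *s y) = cnj c * c + cnj d * d" for c d
    unfolding cinner_comb xx yy xy yx by simp
  show ?thesis
  proof (cases "p = q")
    case True
    show ?thesis
      by (rule exI[of _ 1], rule exI[of _ 0]) (simp add: nrm val xx flip: p_def q_def True, simp add: algebra_simps)
  next
    case False
    define B' where "B' = B / (q - p)"
    define C' where "C' = C / (q - p)"
    obtain w where w1: "cnj w * w = 1" and w2: "Re w * (Im B' + Im C') - Im w * (Re C' - Re B') = 0"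
      using unit_phase_exists by blast
    define r where "r = Re (w * B' + cnj w * C')"
    have imz: "Im (w * B' + cnj w * C') = 0" using w2 by (simp add: algebra_simps)
    have rr: "w * B' + cnj w * C' = complex_of_real r" unfolding r_def using imz
      by (simp add: complex_eq_iff)
    define h where "h = (\<lambda>m::real. m + sqrt (1 - m) * sqrt m * r)"
    have "continuous_on {0..1} h" unfolding h_def by (intro continuous_intros)
    moreover have "h 0 \<le> lam" "lam \<le> h 1" using l0 l1 by (simp_all add: h_def)
    ultimately obtain m where m0: "0 \<le> m" and m1: "m \<le> 1" and hm: "h m = lam"
      using IVT'[of h 0 lam 1] by auto
    define a where "a = sqrt (1 - m)"
    define b where "b = sqrt m"
    have a2: "a * a = 1 - m" using m1 unfolding a_def by simp
    have b2: "b * b = m" using m0 unfolding b_def by simp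
    have hm': "m + a * b * r = lam" using hm unfolding h_def a_def b_def by simp
    let ?c = "complex_of_real a" and ?d = "complex_of_real b * w"
    have "cnj ?c * ?c + cnj ?d * ?d = complex_of_real (a * a + b * b) * 1"
      by (simp add: w1 [symmetric] algebra_simps)
    also have "\<dots> = 1" using a2 b2 by simp
    finally have n1: "cnj ?c * ?c + cnj ?d * ?d = 1" .
    have "w * B + cnj w * C = (q - p) * (w * B' + cnj w * C')"
    proof -
      have qp: "q - p \<noteq> 0" using False by simp
      show ?thesis unfolding B'_def C'_def distrib_left using qp by simp
    qed
    then have BC: "w * B + cnj w * C = (q - p) * complex_of_real r" unfolding rr .
    have "cnj ?c * ?c * p + cnj ?c * ?d * B + cnj ?d * ?c * C + cnj ?d * ?d * q
        = complex_of_real (a*a) * p + complex_of_real (b*b) * (cnj w * w) * q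
          + complex_of_real (a*b) * (w * B + cnj w * C)"
      by (simp add: algebra_simps)
    also have "\<dots> = complex_of_real (1 - m) * p + complex_of_real m * q
          + complex_of_real (a*b) * ((q - p) * complex_of_real r)"
      unfolding BC w1 a2 b2 by simp
    also have "\<dots> = (1 - complex_of_real (m + a * b * r)) * p + complex_of_real (m + a * b * r) * q"
      by (simp add: algebra_simps)
    also have "\<dots> = (1 - complex_of_real lam) * p + complex_of_real lam * q" unfolding hm' by simp
    finally show ?thesis
      by (intro exI[of _ ?c] exI[of _ ?d]) (simp only: nrm val n1 p_def q_def)
  qed
qed



lemma scale_sum: "c *s sum g F = (\<Sum>i\<in>F. c *s (g i :: complex^'n))"
  by (simp add: vec_eq_iff sum_component sum_distrib_left)

lemma avg_k: fixes k S D :: complex assumes "k \<noteq> 0" "k + 1 \<noteq> 0"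
  shows "(1 - 1/(k+1)) * (S / k) + 1/(k+1) * D = (D + S) / (k+1)"
proof -
  have "1 - 1/(k+1) = k/(k+1)" using assms by (simp add: field_simps)
  moreover have "k/(k+1) * (S/k) = S/(k+1)" using assms by simp
  ultimately show ?thesis by (simp add: add_divide_distrib add.commute)
qed
lemma avg_step:
  assumes "m \<ge> (1::nat)"
  shows "(1 - complex_of_real (1/(real m+1))) * (S / of_nat m) + complex_of_real (1/(real m+1)) * D
     = (D + S) / of_nat (m+1)"
proof -
  have e: "complex_of_real (1/(real m+1)) = 1/(of_nat m + 1)" by simp
  have n1: "(of_nat m :: complex) \<noteq> 0" using assms by simp
  have n2: "(of_nat m :: complex) + 1 \<noteq> 0"
    by (metis of_nat_Suc of_nat_eq_0_iff add.commute nat.distinct(1))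
  have e2: "(of_nat (m+1) :: complex) = of_nat m + 1" by simp
  show ?thesis unfolding e e2 by (rule avg_k[OF n1 n2])
qed

lemma nr_avg:
  fixes T :: "complex^'n^'n" and f :: "'n \<Rightarrow> complex^'n"
  assumes onb: "\<forall>i j. cinner (f i) (f j) = (if i = j then 1 else 0)"
    and fin: "finite F" and ne: "F \<noteq> {}"
  shows "\<exists>al. cinner (\<Sum>i\<in>F. al i *s f i) (\<Sum>i\<in>F. al i *s f i) = 1 \<and>
     cinner (\<Sum>i\<in>F. al i *s f i) (T *v (\<Sum>i\<in>F. al i *s f i)) =
       (\<Sum>i\<in>F. cinner (f i) (T *v f i)) / of_nat (card F)"
  using fin ne
proof (induction F rule: finite_ne_induct)
  case (singleton a)
  show ?case by (intro exI[of _ "\<lambda>_. 1"]) (simp add: onb)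
next
  case (insert a F)
  obtain al where h1: "cinner (\<Sum>i\<in>F. al i *s f i) (\<Sum>i\<in>F. al i *s f i) = 1"
    and h2: "cinner (\<Sum>i\<in>F. al i *s f i) (T *v (\<Sum>i\<in>F. al i *s f i)) =
       (\<Sum>i\<in>F. cinner (f i) (T *v f i)) / of_nat (card F)" using insert.IH by blast
  define x where "x = (\<Sum>i\<in>F. al i *s f i)"
  define m where "m = card F"
  have m1: "m \<ge> 1" using insert.hyps(1,2) unfolding m_def by (simp add: Suc_leI card_gt_0_iff)
  have xa: "cinner x (f a) = 0"
    unfolding x_def using insert.hyps(1,3)
    by (auto simp: cinner_sum_left cinner_scale_left onb intro!: sum.neutral)
  define lam where "lam = 1 / (real m + 1)"
  have l0: "0 \<le> lam" "lam \<le> 1" unfolding lam_def by auto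
  obtain c d where c1: "cinner (c *s x + d *s f a) (c *s x + d *s f a) = 1"
    and c2: "cinner (c *s x + d *s f a) (T *v (c *s x + d *s f a)) =
      (1 - complex_of_real lam) * cinner x (T *v x) + complex_of_real lam * cinner (f a) (T *v f a)"
    using segment_lemma[where x=x and y="f a" and lam=lam and T=T, OF h1[folded x_def] _ xa l0] onb by auto
  define al' where "al' = (\<lambda>i. if i = a then d else c * al i)"
  have eq: "(\<Sum>i\<in>insert a F. al' i *s f i) = c *s x + d *s f a"
  proof -
    have "(\<Sum>i\<in>insert a F. al' i *s f i) = al' a *s f a + (\<Sum>i\<in>F. al' i *s f i)"
      using insert.hyps by simp
    also have "(\<Sum>i\<in>F. al' i *s f i) = (\<Sum>i\<in>F. c *s (al i *s f i))"
      using insert.hyps(3) by (intro sum.cong) (auto simp: al'_def vector_smult_assoc)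
    also have "\<dots> = c *s x" unfolding x_def scale_sum ..
    finally show ?thesis by (simp add: al'_def add.commute)
  qed
  have cardi: "card (insert a F) = m + 1" using insert.hyps unfolding m_def by simp
  have "(1 - complex_of_real lam) * cinner x (T *v x) + complex_of_real lam * cinner (f a) (T *v f a)
      = (cinner (f a) (T *v f a) + (\<Sum>i\<in>F. cinner (f i) (T *v f i))) / of_nat (m + 1)"
    unfolding x_def h2 m_def[symmetric] lam_def using avg_step[OF m1] by simp
  also have "\<dots> = (\<Sum>i\<in>insert a F. cinner (f i) (T *v f i)) / of_nat (card (insert a F))"
    using insert.hyps cardi by simp
  finally show ?case using c1 c2 eq by (intro exI[of _ al']) simp
qed



definition onb :: "('i \<Rightarrow> complex^'n) \<Rightarrow> bool" where
  "onb f \<longleftrightarrow> (\<forall>i j. cinner (f i) (f j) = (if i = j then 1 else 0))"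
definition cmpl :: "('i::finite \<Rightarrow> complex^'n) \<Rightarrow> bool" where
  "cmpl f \<longleftrightarrow> (\<forall>v. v = (\<Sum>i\<in>UNIV. cinner (f i) v *s f i))"

lemma cinner_axis_left: "cinner (axis l 1) v = v $ l"
proof -
  have "(\<lambda>j. cnj (axis l 1 $ j) * v $ j) = (\<lambda>j. if j = l then v$j else 0)"
    by (auto simp: axis_def)
  then show ?thesis unfolding cinner_def by (simp only:) simp
qed

lemma complete_row:
  assumes "cmpl (f :: 'i::finite \<Rightarrow> complex^'n)"
  shows "(\<Sum>i\<in>UNIV. (f i) $ j * cnj ((f i) $ l)) = (if j = l then 1 else 0)"
proof -
  have "axis l 1 = (\<Sum>i\<in>UNIV. cinner (f i) (axis l 1) *s f i)"
    using assms unfolding cmpl_def by blast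
  then have "axis l 1 $ j = (\<Sum>i\<in>UNIV. cinner (f i) (axis l 1) * (f i $ j))"
    by (metis (no_types, lifting) sum.cong sum_component vector_smult_component)
  moreover have "cinner (f i) (axis l 1) = cnj (f i $ l)" for i
    using cinner_cnj[of "axis l 1" "f i"] cinner_axis_left[of l "f i"] by simp
  ultimately show ?thesis by (simp add: axis_def mult.commute)
qed

lemma trace_complete:
  fixes T :: "complex^'n^'n" and g :: "'i::finite \<Rightarrow> complex^'n"
  assumes "cmpl g"
  shows "(\<Sum>i\<in>UNIV. cinner (g i) (T *v g i)) = (\<Sum>l\<in>UNIV. T $ l $ l)"
proof -
  have "(\<Sum>i\<in>UNIV. cinner (g i) (T *v g i)) =
        (\<Sum>i\<in>UNIV. \<Sum>l\<in>UNIV. \<Sum>j\<in>UNIV. T $ l $ j * (g i $ j * cnj (g i $ l)))"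
    by (simp add: cinner_def matrix_vector_mult_def sum_distrib_left mult_ac)
  also have "\<dots> = (\<Sum>l\<in>UNIV. \<Sum>j\<in>UNIV. \<Sum>i\<in>UNIV. T $ l $ j * (g i $ j * cnj (g i $ l)))"
    by (subst sum.swap) (rule sum.cong[OF refl], rule sum.swap)
  also have "\<dots> = (\<Sum>l\<in>UNIV. \<Sum>j\<in>UNIV. T $ l $ j * (if j = l then 1 else 0))"
    by (simp add: sum_distrib_left[symmetric] complete_row[OF assms])
  also have "\<dots> = (\<Sum>l\<in>UNIV. T $ l $ l)"
    by (simp add: if_distrib cong: if_cong)
  finally show ?thesis .
qed

definition hh :: "complex^'n \<Rightarrow> complex^'n \<Rightarrow> complex^'n" where
  "hh u v = v - (2 / cinner u u * cinner u v) *s u"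

lemma cnj_cinner_self: "cnj (cinner u u) = cinner u u"
  using cinner_cnj[of u u] .

lemma hh_inner:
  assumes "u \<noteq> 0"
  shows "cinner (hh u v) (hh u w) = cinner v w"
proof -
  define k where "k = cinner u u"
  have k0: "k \<noteq> 0" using assms cinner_self_zero unfolding k_def by blast
  have ck: "cnj k = k" unfolding k_def by (rule cnj_cinner_self)
  have vu: "cnj (cinner u v) = cinner v u" by (rule cinner_cnj)
  have "cinner (hh u v) (hh u w) = cinner v w - (2/k) * cinner u w * cinner v u
      - cnj (2/k) * cnj (cinner u v) * cinner u w + cnj (2/k) * cnj (cinner u v) * (2/k) * cinner u w * k"
    unfolding hh_def k_def
    by (simp add: cinner_diff_left cinner_diff_right cinner_scale_left cinner_scale_right algebra_simps)
  also have "\<dots> = cinner v w"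
    using k0 by (simp add: ck vu field_simps)
  finally show ?thesis .
qed

lemma hh_invol:
  assumes "u \<noteq> 0"
  shows "hh u (hh u v) = v"
proof -
  define k where "k = cinner u u"
  have k0: "k \<noteq> 0" using assms cinner_self_zero unfolding k_def by blast
  have "cinner u (hh u v) = - cinner u v"
    unfolding hh_def using k0 by (simp add: cinner_diff_right cinner_scale_right flip: k_def)
  then show ?thesis unfolding hh_def[of u "hh u v"] by (simp add: hh_def)
qed

lemma hh_add: "hh u (v + w) = hh u v + hh u w"
  by (simp add: hh_def cinner_add_right algebra_simps vec_eq_iff add_divide_distrib)
lemma hh_scale: "hh u (c *s v) = c *s hh u v"
  by (simp add: hh_def cinner_scale_right algebra_simps vec_eq_iff)
lemma hh_zero: "hh u 0 = 0" by (simp add: hh_def)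
lemma hh_sum: "finite I \<Longrightarrow> hh u (\<Sum>i\<in>I. c i *s g i) = (\<Sum>i\<in>I. c i *s hh u (g i))"
  by (induct I rule: finite_induct) (simp_all add: hh_zero hh_add hh_scale)
lemma hh_orth: "cinner u v = 0 \<Longrightarrow> hh u v = v"
  by (simp add: hh_def)



lemma householder:
  fixes T :: "complex^'n^'n" and f :: "'i::finite \<Rightarrow> complex^'n"
  assumes of: "onb f" and cf: "cmpl f" and aJ: "a \<in> J"
    and xdef: "x = (\<Sum>i\<in>J. al i *s f i)" and xx: "cinner x x = 1"
  shows "\<exists>f'. onb f' \<and> cmpl f' \<and> (\<forall>i. i \<notin> J \<longrightarrow> f' i = f i) \<and>
     cinner (f' a) (T *v f' a) = cinner x (T *v x)"
proof -
  define z where "z = cinner (f a) x"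
  define ph where "ph = (if z = 0 then 1 else cnj z / complex_of_real (cmod z))"
  have ph1: "cnj ph * ph = 1"
  proof (cases "z = 0")
    case False
    then have "cnj ph * ph = (cnj z * z) / complex_of_real ((cmod z)^2)"
      unfolding ph_def by (simp add: power2_eq_square)
    also have "\<dots> = 1" using False by (simp add: cnj_mult_self)
    finally show ?thesis .
  qed (simp add: ph_def)
  have ph1': "ph * cnj ph = 1" using ph1 by (simp add: mult.commute)
  define x' where "x' = ph *s x"
  have x'x': "cinner x' x' = 1" unfolding x'_def
    by (simp add: cinner_scale_left cinner_scale_right xx mult.assoc[symmetric] ph1 ph1')
  have x'T: "cinner x' (T *v x') = cinner x (T *v x)" unfolding x'_def
    by (simp add: mv_scale cinner_scale_left cinner_scale_right mult.assoc[symmetric] ph1 ph1')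
  define rho where "rho = cinner (f a) x'"
  have rho_real: "cnj rho = rho"
  proof -
    have "rho = ph * z" unfolding rho_def x'_def z_def by (simp add: cinner_scale_right)
    also have "ph * z = complex_of_real (cmod z)"
    proof (cases "z = 0")
      case False
      then show ?thesis unfolding ph_def
        using cnj_mult_self[of z] by (simp add: power2_eq_square field_simps)
    qed (simp add: ph_def)
    finally show ?thesis by simp
  qed
  have faa: "cinner (f a) (f a) = 1" using of unfolding onb_def by simp
  have orthJ: "cinner x' (f i) = 0" if "i \<notin> J" for i
  proof -
    have "cinner x (f i) = (\<Sum>j\<in>J. cnj (al j) * cinner (f j) (f i))"
      unfolding xdef by (simp add: cinner_sum_left cinner_scale_left)
    also have "\<dots> = 0" using that of unfolding onb_def by (intro sum.neutral) auto
    finally show ?thesis unfolding x'_def by (simp add: cinner_scale_left)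
  qed
  define u where "u = f a - x'"
  show ?thesis
  proof (cases "u = 0")
    case True
    then have "f a = x'" unfolding u_def by simp
    then show ?thesis using of cf x'T by (intro exI[of _ f]) simp
  next
    case False
    define f' where "f' = (\<lambda>i. hh u (f i))"
    have o': "onb f'" using of unfolding onb_def f'_def by (simp add: hh_inner[OF False])
    have c': "cmpl f'" unfolding cmpl_def
    proof
      fix v
      have "(\<Sum>i\<in>UNIV. cinner (f' i) v *s f' i) = (\<Sum>i\<in>UNIV. cinner (f i) (hh u v) *s hh u (f i))"
      proof (rule sum.cong[OF refl])
        fix i
        have "cinner (f' i) v = cinner (hh u (f i)) (hh u (hh u v))"
          unfolding f'_def hh_invol[OF False] ..
        also have "\<dots> = cinner (f i) (hh u v)" by (rule hh_inner[OF False])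
        finally show "cinner (f' i) v *s f' i = cinner (f i) (hh u v) *s hh u (f i)"
          unfolding f'_def by simp
      qed
      also have "\<dots> = hh u (\<Sum>i\<in>UNIV. cinner (f i) (hh u v) *s f i)"
        by (simp add: hh_sum)
      also have "(\<Sum>i\<in>UNIV. cinner (f i) (hh u v) *s f i) = hh u v"
        using cf unfolding cmpl_def by metis
      also have "hh u (hh u v) = v" by (rule hh_invol[OF False])
      finally show "v = (\<Sum>i\<in>UNIV. cinner (f' i) v *s f' i)" by simp
    qed
    have fix': "f' i = f i" if "i \<notin> J" for i
    proof -
      have "a \<noteq> i" using aJ that by auto
      then have "cinner (f a) (f i) = 0" using of unfolding onb_def by simp
      then have "cinner u (f i) = 0" unfolding u_def using orthJ[OF that]
        by (simp add: cinner_diff_left)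
      then show ?thesis unfolding f'_def by (rule hh_orth)
    qed
    have fa': "f' a = x'"
    proof -
      have xa': "cinner x' (f a) = rho" using cinner_cnj[of "f a" x'] rho_real unfolding rho_def by simp
      have ua: "cinner u (f a) = 1 - rho"
        unfolding u_def using faa xa' by (simp add: cinner_diff_left)
      have uu: "cinner u u = 2 * (1 - rho)"
      proof -
        have "cinner u u = cinner (f a) (f a) - cinner (f a) x' - cinner x' (f a) + cinner x' x'"
          unfolding u_def by (simp add: cinner_diff_left cinner_diff_right)
        also have "cinner x' (f a) = rho" by (rule xa')
        finally show ?thesis using faa x'x' unfolding rho_def by simp
      qed
      have r1: "1 - rho \<noteq> 0" using uu False cinner_self_zero[of u] by auto
      have "f' a = f a - (2 / cinner u u * cinner u (f a)) *s u" unfolding f'_def hh_def ..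
      also have "2 / cinner u u * cinner u (f a) = 1" using uu ua r1 by simp
      finally show ?thesis unfolding u_def by simp
    qed
    show ?thesis using o' c' fix' fa' x'T by (intro exI[of _ f']) simp
  qed
qed

lemma zd_ind:
  fixes T :: "complex^'n^'n"
  assumes "finite J"
  shows "\<And>f::'n \<Rightarrow> complex^'n. onb f \<Longrightarrow> cmpl f \<Longrightarrow> (\<Sum>i\<in>J. cinner (f i) (T *v f i)) = 0 \<Longrightarrow>
    \<exists>g. onb g \<and> cmpl g \<and> (\<forall>i\<in>J. cinner (g i) (T *v g i) = 0) \<and> (\<forall>i. i \<notin> J \<longrightarrow> g i = f i)"
  using assms
proof (induction J rule: finite_induct)
  case empty
  then show ?case by blast
next
  case (insert a F f)
  have ofo: "\<forall>i j. cinner (f i) (f j) = (if i = j then 1 else 0)" using insert.prems unfolding onb_def by blast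
  obtain al where x1: "cinner (\<Sum>i\<in>insert a F. al i *s f i) (\<Sum>i\<in>insert a F. al i *s f i) = 1"
    and x2: "cinner (\<Sum>i\<in>insert a F. al i *s f i) (T *v (\<Sum>i\<in>insert a F. al i *s f i)) =
       (\<Sum>i\<in>insert a F. cinner (f i) (T *v f i)) / of_nat (card (insert a F))"
    using nr_avg[OF ofo, of "insert a F" T] insert.hyps by auto
  have x0: "cinner (\<Sum>i\<in>insert a F. al i *s f i) (T *v (\<Sum>i\<in>insert a F. al i *s f i)) = 0"
    using x2 insert.prems(3) by simp
  obtain f' where o': "onb f'" and c': "cmpl f'" and fx: "\<forall>i. i \<notin> insert a F \<longrightarrow> f' i = f i"
    and fa: "cinner (f' a) (T *v f' a) = 0"
    using householder[OF insert.prems(1,2) insertI1 refl x1, of T] x0 by auto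
  let ?h = "\<lambda>g i. cinner (g i) (T *v g i)"
  have split: "sum (?h g) UNIV = sum (?h g) (UNIV - insert a F) + sum (?h g) (insert a F)" for g
    by (rule sum.subset_diff) auto
  have "sum (?h f') (UNIV - insert a F) = sum (?h f) (UNIV - insert a F)"
    using fx by (intro sum.cong) auto
  moreover have "sum (?h f') UNIV = sum (?h f) UNIV"
    using trace_complete[OF c'] trace_complete[OF insert.prems(2)] by simp
  ultimately have "sum (?h f') (insert a F) = sum (?h f) (insert a F)"
    using split[of f] split[of f'] by simp
  then have "sum (?h f') F = 0" using insert.prems(3) insert.hyps fa by simp
  then obtain g where g1: "onb g" "cmpl g" and g2: "\<forall>i\<in>F. ?h g i = 0" and g3: "\<forall>i. i \<notin> F \<longrightarrow> g i = f' i"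
    using insert.IH[OF o' c'] by blast
  have "\<forall>i\<in>insert a F. ?h g i = 0" using g2 g3 fa insert.hyps by auto
  moreover have "\<forall>i. i \<notin> insert a F \<longrightarrow> g i = f i" using g3 fx by auto
  ultimately show ?case using g1 by blast
qed

lemma zero_diag:
  fixes T :: "complex^'n^'n"
  assumes "(\<Sum>l\<in>UNIV. T $ l $ l) = 0"
  shows "\<exists>g::'n \<Rightarrow> complex^'n. onb g \<and> cmpl g \<and> (\<forall>i. cinner (g i) (T *v g i) = 0)"
proof -
  define e where "e = (\<lambda>i::'n. axis i (1::complex))"
  have oe: "onb e" unfolding onb_def e_def cinner_axis_left by (simp add: axis_def)
  have ce: "cmpl e" unfolding cmpl_def e_def
  proof
    fix v :: "complex^'n"
    have "(\<Sum>x\<in>UNIV. v $ x * (if i = x then 1 else 0)) = v $ i" for i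
    proof -
      have "(\<lambda>x. v $ x * (if i = x then 1 else 0)) = (\<lambda>x. if i = x then v $ x else 0)" by auto
      then show ?thesis by (simp only:) simp
    qed
    then show "v = (\<Sum>i\<in>UNIV. cinner (axis i 1) v *s axis i 1)"
      unfolding cinner_axis_left by (simp add: vec_eq_iff sum_component axis_def)
  qed
  have "(\<Sum>i\<in>UNIV. cinner (e i) (T *v e i)) = 0"
    using trace_complete[OF ce] assms by simp
  then show ?thesis using zd_ind[of UNIV e T] oe ce by auto
qed



definition comp :: "complex^'a::finite \<Rightarrow> complex^('a \<times> 'b::finite) \<Rightarrow> complex^'b" where
  "comp e p = (\<chi> k. \<Sum>j\<in>UNIV. cnj (e $ j) * p $ (j, k))"
definition GG :: "complex^('a::finite \<times> 'b::finite) \<Rightarrow> complex^('a \<times> 'b) \<Rightarrow> complex^'a^'a" where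
  "GG p q = (\<chi> l j. \<Sum>k\<in>UNIV. cnj (p $ (j, k)) * q $ (l, k))"

lemma G_inner: "cinner (comp e p) (comp e q) = cinner e (GG p q *v e)"
proof -
  have "cinner (comp e p) (comp e q) = (\<Sum>k\<in>UNIV. \<Sum>l\<in>UNIV. \<Sum>j\<in>UNIV. e $ j * cnj (p $ (j, k)) * (cnj (e $ l) * q $ (l, k)))"
    unfolding cinner_def comp_def by (simp add: sum_distrib_left sum_distrib_right)
  also have "\<dots> = (\<Sum>l\<in>UNIV. \<Sum>j\<in>UNIV. \<Sum>k\<in>UNIV. e $ j * cnj (p $ (j, k)) * (cnj (e $ l) * q $ (l, k)))"
    by (subst sum.swap) (rule sum.cong[OF refl], rule sum.swap)
  also have "\<dots> = cinner e (GG p q *v e)"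
    unfolding cinner_def GG_def matrix_vector_mult_def
    by (simp add: sum_distrib_left sum_distrib_right mult_ac)
  finally show ?thesis .
qed

lemma G_trace: "(\<Sum>l\<in>UNIV. GG p q $ l $ l) = cinner p q"
  unfolding GG_def cinner_def
  by (simp add: UNIV_Times_UNIV[symmetric] sum.cartesian_product del: UNIV_Times_UNIV)

lemma comp_scale: "comp e (c *s p) = c *s comp e p"
  by (simp add: comp_def vec_eq_iff sum_distrib_left mult_ac)
lemma comp_diff: "comp e (p - q) = comp e p - comp e q"
  by (simp add: comp_def vec_eq_iff sum_subtractf right_diff_distrib)

lemma recon:
  assumes "cmpl (g :: 'a::finite \<Rightarrow> complex^'a)"
  shows "(\<Sum>i\<in>UNIV. tensor (g i) (comp (g i) p)) = (p :: complex^('a::finite \<times> 'b::finite))"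
proof -
  have "(\<Sum>i\<in>UNIV. tensor (g i) (comp (g i) p)) $ (j, k) = p $ (j, k)" for j k
  proof -
    have "(\<Sum>i\<in>UNIV. tensor (g i) (comp (g i) p)) $ (j, k)
        = (\<Sum>i\<in>UNIV. \<Sum>l\<in>UNIV. p $ (l, k) * (g i $ j * cnj (g i $ l)))"
      unfolding tensor_def comp_def by (simp add: sum_component sum_distrib_left mult_ac)
    also have "\<dots> = (\<Sum>l\<in>UNIV. p $ (l, k) * (\<Sum>i\<in>UNIV. g i $ j * cnj (g i $ l)))"
      by (subst sum.swap) (simp add: sum_distrib_left)
    also have "\<dots> = (\<Sum>l\<in>UNIV. p $ (l, k) * (if j = l then 1 else 0))"
      by (simp add: complete_row[OF assms])
    also have "\<dots> = p $ (j, k)"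
    proof -
      have "(\<lambda>l. p $ (l, k) * (if j = l then 1 else 0)) = (\<lambda>l. if j = l then p $ (l, k) else 0)" by auto
      then show ?thesis by (simp only:) simp
    qed
    finally show ?thesis .
  qed
  then show ?thesis by (simp add: vec_eq_iff)
qed

lemma tensor_scale: "tensor x (c *s y) = c *s tensor x y"
  by (simp add: tensor_def vec_eq_iff mult_ac)

lemma lin_comb_quad: "cinner e ((\<chi> l j. a * M $ l $ j - b * N $ l $ j) *v e) = a * cinner e (M *v e) - b * cinner e (N *v e)"
  by (simp add: cinner_def matrix_vector_mult_def sum_distrib_left sum_subtractf algebra_simps)



lemma cinner_self_ofreal: "cinner a a = complex_of_real (Re (cinner a a))"
  using cinner_self_nonneg(2)[of a] by (simp add: complex_eq_iff)

lemma norm_pos: "a \<noteq> 0 \<Longrightarrow> Re (cinner a a) > 0"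
  using cinner_self_nonneg(1)[of a] cinner_self_zero[of a] cinner_self_ofreal[of a]
  by (metis less_eq_real_def of_real_0)

lemma normalize_unit:
  assumes "a \<noteq> 0"
  shows "cinner (complex_of_real (1 / sqrt (Re (cinner a a))) *s a) (complex_of_real (1 / sqrt (Re (cinner a a))) *s a) = 1"
    and "complex_of_real (sqrt (Re (cinner a a))) *s (complex_of_real (1 / sqrt (Re (cinner a a))) *s a) = a"
proof -
  define A where "A = Re (cinner a a)"
  have A0: "A > 0" using norm_pos[OF assms] unfolding A_def .
  have "cinner (complex_of_real (1 / sqrt A) *s a) (complex_of_real (1 / sqrt A) *s a)
      = complex_of_real (1 / sqrt A * (1 / sqrt A) * A)"
    by (subst cinner_self_ofreal) (simp add: cinner_scale_left cinner_scale_right A_def)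
  also have "1 / sqrt A * (1 / sqrt A) * A = 1" using A0
    by (simp add: field_simps real_sqrt_mult[symmetric])
  finally show "cinner (complex_of_real (1 / sqrt (Re (cinner a a))) *s a) (complex_of_real (1 / sqrt (Re (cinner a a))) *s a) = 1"
    unfolding A_def by simp
  have "sqrt A * (1 / sqrt A) = 1" using A0 by simp
  then have "complex_of_real (sqrt A) * complex_of_real (1 / sqrt A) = 1"
    by (metis of_real_1 of_real_mult)
  then show "complex_of_real (sqrt (Re (cinner a a))) *s (complex_of_real (1 / sqrt (Re (cinner a a))) *s a) = a"
    unfolding A_def[symmetric] by (simp add: vector_smult_assoc)
qed

lemma cinner_neg_left: "cinner (- x) y = - cinner x y"
  by (simp add: cinner_def sum_negf)
lemma cinner_neg_right: "cinner x (- y) = - cinner x y"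
  by (simp add: cinner_def sum_negf)

lemma per_i:
  fixes a b z :: "complex^'b" and s t xr :: real
  assumes s0: "s > 0" and t0: "t > 0"
    and hx: "cinner (complex_of_real (sqrt s) *s a) (complex_of_real (sqrt t) *s b - complex_of_real (sqrt s) *s a) = complex_of_real xr"
    and x0: "xr \<le> 0"
    and hy: "2 * xr + Re (cinner (complex_of_real (sqrt t) *s b - complex_of_real (sqrt s) *s a) (complex_of_real (sqrt t) *s b - complex_of_real (sqrt s) *s a)) \<ge> 0"
    and zz: "cinner z z = 1"
    and gd: "gm = (if b = 0 then z else complex_of_real (1 / sqrt (Re (cinner b b))) *s b)"
    and ed: "et = (if a = 0 then - gm else complex_of_real (1 / sqrt (Re (cinner a a))) *s a)"
  shows "Re (cinner a a) \<ge> 0 \<and> Re (cinner b b) \<ge> 0 \<and> cinner et et = 1 \<and> cinner gm gm = 1 \<and>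
    complex_of_real (sqrt (Re (cinner a a))) *s et = a \<and> complex_of_real (sqrt (Re (cinner b b))) *s gm = b \<and>
    cinner et gm \<in> \<real> \<and> s * Re (cinner a a) \<le> t * Re (cinner b b) \<and>
    sqrt (s * Re (cinner a a)) \<ge> sqrt (t * Re (cinner b b)) * Re (cinner et gm)"
proof -
  define Ar where "Ar = Re (cinner a a)"
  define Br where "Br = Re (cinner b b)"
  define ss where "ss = sqrt s"
  define st where "st = sqrt t"
  have ss0: "ss > 0" and st0: "st > 0" using s0 t0 unfolding ss_def st_def by auto
  have ss2: "ss * ss = s" and st2: "st * st = t" using s0 t0 unfolding ss_def st_def by auto
  have Ar0: "Ar \<ge> 0" and Br0: "Br \<ge> 0" unfolding Ar_def Br_def by (simp_all add: cinner_self_nonneg)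
  have aa: "cinner a a = complex_of_real Ar" unfolding Ar_def by (rule cinner_self_ofreal)
  have bb: "cinner b b = complex_of_real Br" unfolding Br_def by (rule cinner_self_ofreal)
  define Cab where "Cab = cinner a b"
  have ba: "cinner b a = cnj Cab" unfolding Cab_def by (simp add: cinner_cnj)
  have e1: "complex_of_real (ss * st) * Cab = complex_of_real (xr + s * Ar)"
  proof -
    have "cinner (complex_of_real ss *s a) (complex_of_real st *s b - complex_of_real ss *s a)
        = complex_of_real (ss * st) * Cab - complex_of_real (ss * ss) * complex_of_real Ar"
      by (simp add: cinner_diff_right cinner_scale_left cinner_scale_right aa Cab_def)
    then show ?thesis using hx unfolding ss_def[symmetric] st_def[symmetric] ss2
      by (simp add: algebra_simps)
  qed
  define cr where "cr = (xr + s * Ar) / (ss * st)"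
  have Cr: "Cab = complex_of_real cr"
  proof -
    have "ss * st \<noteq> 0" using ss0 st0 by simp
    then show ?thesis using e1 unfolding cr_def
      by (simp add: field_simps)
  qed
  have c3: "ss * st * cr \<le> s * Ar"
  proof -
    have "ss * st * cr = xr + s * Ar" unfolding cr_def using ss0 st0 by simp
    then show ?thesis using x0 by simp
  qed
  have c2: "s * Ar \<le> t * Br"
  proof -
    have "cinner (complex_of_real st *s b - complex_of_real ss *s a) (complex_of_real st *s b - complex_of_real ss *s a)
        = complex_of_real (st * st * Br - 2 * (ss * st * cr) + ss * ss * Ar)"
      by (simp add: cinner_diff_right cinner_diff_left cinner_scale_left cinner_scale_right aa bb
          flip: Cab_def add: ba Cr algebra_simps)
    then have "Re (cinner (complex_of_real st *s b - complex_of_real ss *s a) (complex_of_real st *s b - complex_of_real ss *s a))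
        = t * Br - 2 * (xr + s * Ar) + s * Ar"
      unfolding ss2 st2 using ss0 st0 by (simp add: cr_def)
    then show ?thesis using hy unfolding ss_def[symmetric] st_def[symmetric] by (simp add: mult.commute)
  qed
  have gmu: "cinner gm gm = 1" and gms: "complex_of_real (sqrt Br) *s gm = b"
    using normalize_unit[of b] zz unfolding gd Br_def by (cases "b = 0"; simp)+
  show ?thesis
  proof (cases "a = 0")
    case True
    then have A00: "Ar = 0" unfolding Ar_def by simp
    have etgm: "cinner et gm = -1" using True ed gmu by (simp add: cinner_neg_left)
    have etet: "cinner et et = 1" using True ed gmu by (simp add: cinner_neg_left cinner_neg_right)
    have ets: "complex_of_real (sqrt Ar) *s et = a" using A00 True by simp
    have "sqrt (t * Br) * Re (cinner et gm) \<le> sqrt (s * Ar)" using etgm A00 Br0 t0 by simp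
    then show ?thesis using etgm etet ets gmu gms Ar0 Br0 A00 t0
      unfolding Ar_def[symmetric] Br_def[symmetric] by simp
  next
    case False
    have Ap: "Ar > 0" using norm_pos[OF False] unfolding Ar_def .
    have Bp: "Br > 0"
    proof -
      have "s * Ar > 0" using s0 Ap by simp
      then have "t * Br > 0" using c2 by linarith
      then show ?thesis using t0 by (simp add: zero_less_mult_iff)
    qed
    then have bn: "b \<noteq> 0" unfolding Br_def by auto
    have etd: "et = complex_of_real (1 / sqrt Ar) *s a" using ed False unfolding Ar_def by simp
    have gmd: "gm = complex_of_real (1 / sqrt Br) *s b" using gd bn unfolding Br_def by simp
    have eg: "cinner et gm = complex_of_real (cr / (sqrt Ar * sqrt Br))"
      unfolding etd gmd by (simp add: cinner_scale_left cinner_scale_right flip: Cab_def add: Cr)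
    have etu: "cinner et et = 1" and ets: "complex_of_real (sqrt Ar) *s et = a"
      using normalize_unit[OF False] unfolding etd Ar_def by simp_all
    have key: "sqrt (t * Br) * (cr / (sqrt Ar * sqrt Br)) \<le> sqrt (s * Ar)"
    proof -
      have "sqrt (t * Br) * (cr / (sqrt Ar * sqrt Br)) = st * cr / sqrt Ar"
        using Bp unfolding st_def by (simp add: real_sqrt_mult)
      also have "\<dots> \<le> ss * Ar / sqrt Ar"
      proof -
        have "st * cr \<le> ss * Ar"
        proof -
          have "ss * (st * cr) \<le> ss * (ss * Ar)" using c3 ss2 by (simp add: mult_ac)
          then show ?thesis using ss0 by simp
        qed
        then show ?thesis using Ap by (simp add: divide_right_mono)
      qed
      also have "\<dots> = sqrt (s * Ar)"
      proof -
        have h: "Ar / sqrt Ar = sqrt Ar" using Ap real_div_sqrt by simp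
        have "ss * Ar / sqrt Ar = ss * (Ar / sqrt Ar)" by simp
        then show ?thesis using h unfolding ss_def by (simp add: real_sqrt_mult)
      qed
      finally show ?thesis .
    qed
    show ?thesis using etu gmu ets gms Ar0 Br0 c2 key eg
      unfolding Ar_def[symmetric] Br_def[symmetric] by simp
  qed
qed



theorem lemma3:
  fixes phi psi :: "complex ^ ('a::finite \<times> 'b::finite)"
    and s t :: real
  assumes "cinner phi phi = 1" and "cinner psi psi = 1"
    and "cinner phi psi \<in> \<real>" and "Re (cinner phi psi) > 0"
    and "s > 0" and "t > 0" and "s + t = 1" and "s \<le> t"
    and "sqrt (s / t) \<ge> Re (cinner phi psi)"
  shows "\<exists>(e :: 'a \<Rightarrow> complex ^ 'a) (si :: 'a \<Rightarrow> real) (ti :: 'a \<Rightarrow> real)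
            (eta :: 'a \<Rightarrow> complex ^ 'b) (gam :: 'a \<Rightarrow> complex ^ 'b).
    orthonormal_basis e \<and>
    (\<forall>i. si i \<ge> 0 \<and> ti i \<ge> 0 \<and> cinner (eta i) (eta i) = 1 \<and> cinner (gam i) (gam i) = 1) \<and>
    phi = (\<Sum>i\<in>UNIV. complex_of_real (sqrt (si i)) *s tensor (e i) (eta i)) \<and>
    psi = (\<Sum>i\<in>UNIV. complex_of_real (sqrt (ti i)) *s tensor (e i) (gam i)) \<and>
    (\<forall>i. cinner (eta i) (gam i) \<in> \<real> \<and> s * si i \<le> t * ti i \<and>
         sqrt (s * si i) \<ge> sqrt (t * ti i) * Re (cinner (eta i) (gam i)))"
proof -
  note phph = assms(1) and psps = assms(2) and s0 = assms(5) and t0 = assms(6)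
  define c where "c = Re (cinner phi psi)"
  have pp: "cinner phi psi = complex_of_real c"
    using assms(3) unfolding c_def by (simp add: complex_is_Real_iff complex_eq_iff)
  have qp: "cinner psi phi = complex_of_real c"
    using cinner_cnj[of phi psi] pp by simp
  define ss where "ss = sqrt s"
  define st where "st = sqrt t"
  have ss2: "ss * ss = s" and st2: "st * st = t" using s0 t0 unfolding ss_def st_def by auto
  have ss0: "ss > 0" and st0: "st > 0" using s0 t0 unfolding ss_def st_def by auto
  define u where "u = complex_of_real (sqrt s) *s phi"
  define v where "v = complex_of_real (sqrt t) *s psi"
  define w where "w = v - u"
  define Xr where "Xr = ss * st * c - s"
  define Yr where "Yr = s + t - 2 * (ss * st * c)"
  have X: "cinner u w = complex_of_real Xr"
    unfolding w_def u_def v_def Xr_def ss_def[symmetric] st_def[symmetric]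
    by (simp add: cinner_diff_right cinner_scale_left cinner_scale_right pp phph flip: ss2)
  have Y: "cinner w w = complex_of_real Yr"
    unfolding w_def u_def v_def Yr_def ss_def[symmetric] st_def[symmetric]
    by (simp add: cinner_diff_right cinner_diff_left cinner_scale_left cinner_scale_right pp qp phph psps
        flip: ss2 st2, simp add: algebra_simps)
  have Xle: "Xr \<le> 0"
  proof -
    have "c \<le> sqrt (s / t)" using assms(9) unfolding c_def .
    then have "ss * st * c \<le> ss * st * sqrt (s / t)" using ss0 st0 by simp
    also have "ss * st * sqrt (s / t) = s" unfolding ss_def st_def using s0 t0
      by (simp add: real_sqrt_divide)
    finally show ?thesis unfolding Xr_def by simp
  qed
  have XY: "2 * Xr + Yr \<ge> 0" unfolding Xr_def Yr_def using assms(8) by simp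
  have Yge: "Yr \<ge> 0" using cinner_self_nonneg(1)[of w] Y by simp
  define T where "T = (\<chi> l j. complex_of_real Yr * GG u w $ l $ j - complex_of_real Xr * GG w w $ l $ j)"
  have trT: "(\<Sum>l\<in>UNIV. T $ l $ l) = 0"
  proof -
    have "(\<Sum>l\<in>UNIV. T $ l $ l) = complex_of_real Yr * (\<Sum>l\<in>UNIV. GG u w $ l $ l) - complex_of_real Xr * (\<Sum>l\<in>UNIV. GG w w $ l $ l)"
      unfolding T_def by (simp add: sum_subtractf sum_distrib_left)
    also have "\<dots> = 0" unfolding G_trace X Y by simp
    finally show ?thesis .
  qed
  obtain g :: "'a \<Rightarrow> complex^'a" where og: "onb g" and cg: "cmpl g" and zg: "\<forall>i. cinner (g i) (T *v g i) = 0"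
    using zero_diag[OF trT] by blast
  define A where "A = (\<lambda>i. comp (g i) phi)"
  define B where "B = (\<lambda>i. comp (g i) psi)"
  have cu: "comp (g i) u = complex_of_real (sqrt s) *s A i" for i
    unfolding u_def A_def comp_scale ..
  have cw: "comp (g i) w = complex_of_real (sqrt t) *s B i - complex_of_real (sqrt s) *s A i" for i
    unfolding w_def v_def u_def A_def B_def comp_diff comp_scale ..
  have perx: "\<exists>xr. cinner (complex_of_real (sqrt s) *s A i) (complex_of_real (sqrt t) *s B i - complex_of_real (sqrt s) *s A i) = complex_of_real xr
     \<and> xr \<le> 0 \<and> 2 * xr + Re (cinner (complex_of_real (sqrt t) *s B i - complex_of_real (sqrt s) *s A i) (complex_of_real (sqrt t) *s B i - complex_of_real (sqrt s) *s A i)) \<ge> 0" for i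
  proof -
    define xi where "xi = cinner (comp (g i) u) (comp (g i) w)"
    define yi where "yi = cinner (comp (g i) w) (comp (g i) w)"
    have rel: "complex_of_real Yr * xi - complex_of_real Xr * yi = 0"
      using zg[rule_format, of i] unfolding T_def lin_comb_quad xi_def yi_def G_inner .
    have yr: "yi = complex_of_real (Re yi)" "Re yi \<ge> 0" unfolding yi_def
      by (rule cinner_self_ofreal, rule cinner_self_nonneg)
    have "\<exists>xr. xi = complex_of_real xr \<and> xr \<le> 0 \<and> 2 * xr + Re yi \<ge> 0"
    proof (cases "Yr = 0")
      case True
      then have "w = 0" using Y cinner_self_zero[of w] by simp
      then have "comp (g i) w = 0" by (simp add: comp_def vec_eq_iff)
      then show ?thesis unfolding xi_def yi_def by (intro exI[of _ 0]) simp
    next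
      case False
      then have Yp: "Yr > 0" using Yge by simp
      define xr where "xr = Xr / Yr * Re yi"
      have "complex_of_real Yr * xi = complex_of_real Yr * complex_of_real xr"
        using rel yr(1) Yp unfolding xr_def by (simp add: field_simps)
      then have "xi = complex_of_real xr" using Yp by simp
      moreover have "xr \<le> 0" unfolding xr_def using Xle Yp yr(2)
        by (simp add: divide_nonpos_pos mult_nonpos_nonneg)
      moreover have "2 * xr + Re yi \<ge> 0"
      proof -
        have "2 * xr + Re yi = (2 * Xr + Yr) / Yr * Re yi" unfolding xr_def using Yp
          by (simp add: field_simps)
        then show ?thesis using XY Yp yr(2) by simp
      qed
      ultimately show ?thesis by blast
    qed
    then show ?thesis unfolding xi_def yi_def cu cw .
  qed
  obtain k0 :: 'b where True by simp
  define z where "z = axis k0 (1::complex)"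
  have zz: "cinner z z = 1" unfolding z_def cinner_axis_left by simp
  define gam where "gam = (\<lambda>i. if B i = 0 then z else complex_of_real (1 / sqrt (Re (cinner (B i) (B i)))) *s B i)"
  define eta where "eta = (\<lambda>i. if A i = 0 then - gam i else complex_of_real (1 / sqrt (Re (cinner (A i) (A i)))) *s A i)"
  define si where "si = (\<lambda>i. Re (cinner (A i) (A i)))"
  define ti where "ti = (\<lambda>i. Re (cinner (B i) (B i)))"
  have P: "si i \<ge> 0 \<and> ti i \<ge> 0 \<and> cinner (eta i) (eta i) = 1 \<and> cinner (gam i) (gam i) = 1 \<and>
    complex_of_real (sqrt (si i)) *s eta i = A i \<and> complex_of_real (sqrt (ti i)) *s gam i = B i \<and>
    cinner (eta i) (gam i) \<in> \<real> \<and> s * si i \<le> t * ti i \<and>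
    sqrt (s * si i) \<ge> sqrt (t * ti i) * Re (cinner (eta i) (gam i))" for i
  proof -
    obtain xr where h: "cinner (complex_of_real (sqrt s) *s A i) (complex_of_real (sqrt t) *s B i - complex_of_real (sqrt s) *s A i) = complex_of_real xr"
      "xr \<le> 0" "2 * xr + Re (cinner (complex_of_real (sqrt t) *s B i - complex_of_real (sqrt s) *s A i) (complex_of_real (sqrt t) *s B i - complex_of_real (sqrt s) *s A i)) \<ge> 0"
      using perx[of i] by blast
    show ?thesis unfolding si_def ti_def
      by (rule per_i[OF s0 t0 h zz]) (simp_all add: gam_def eta_def)
  qed
  have ob: "orthonormal_basis g" using og unfolding onb_def orthonormal_basis_def .
  have rphi: "phi = (\<Sum>i\<in>UNIV. complex_of_real (sqrt (si i)) *s tensor (g i) (eta i))"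
  proof -
    have "(\<Sum>i\<in>UNIV. complex_of_real (sqrt (si i)) *s tensor (g i) (eta i)) = (\<Sum>i\<in>UNIV. tensor (g i) (A i))"
      using P by (simp add: tensor_scale[symmetric])
    also have "\<dots> = phi" unfolding A_def by (rule recon[OF cg])
    finally show ?thesis by simp
  qed
  have rpsi: "psi = (\<Sum>i\<in>UNIV. complex_of_real (sqrt (ti i)) *s tensor (g i) (gam i))"
  proof -
    have "(\<Sum>i\<in>UNIV. complex_of_real (sqrt (ti i)) *s tensor (g i) (gam i)) = (\<Sum>i\<in>UNIV. tensor (g i) (B i))"
      using P by (simp add: tensor_scale[symmetric])
    also have "\<dots> = psi" unfolding B_def by (rule recon[OF cg])
    finally show ?thesis by simp
  qed
  show ?thesis
    apply (rule exI[of _ g], rule exI[of _ si], rule exI[of _ ti], rule exI[of _ eta], rule exI[of _ gam])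
    using ob P rphi rpsi by blast
qed

end
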